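(* Let $\mathcal{C}$ be a polyhedral complex in $\mathbb{R}^n$, let $F:|\mathcal{C}|\to\mathbb{R}$ be affine-linear on each cell of $\mathcal{C}$, and let $[a,b]$ be an interval of transversal thresholds for $F$ on $\mathcal{C}$. Then for every $c\in[a,b]$, the set $\{x\in|\mathcal{C}|:F(x)\le c\}$ is homotopy equivalent to $\{x\in|\mathcal{C}|:F(x)\le a\}$, and $\{x\in|\mathcal{C}|:F(x)\ge c\}$ is homotopy equivalent to $\{x\in|\mathcal{C}|:F(x)\ge b\}$.
   Context: A polyhedral set in $\mathbb{R}^n$ is an intersection of finitely many closed affine half-spaces. A face of a polyhedral set $P$ is $\emptyset$, $P$, or $P\cap H$ for a hyperplane $H$ meeting $P$ with $P$ contained in one closed half-space of $H$. A polyhedral complex is a finite set $\mathcal{C}$ of polyhedral sets (cells) such that every face of a cell is a cell and any two cells intersect in a common face; $|\mathcal{C}|$ is the union of its cells. For $F:|\mathcal{C}|\to\mathbb{R}$ affine-linear on each cell, a cell $C$ is flat if $F$ is constant on $C$ (all $0$-cells are flat). A closed interval $[a,b]$ is an interval of transversal thresholds for $F$ on $\mathcal{C}$ if no flat cell $C$ of $\mathcal{C}$ has $F(C)\subseteq[a,b]$. *)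

theory Defs
  imports "HOL-Analysis.Analysis"
begin

definition poly_face :: "'a::euclidean_space set \<Rightarrow> 'a set \<Rightarrow> bool" where
  "poly_face T P \<longleftrightarrow> T = {} \<or> T = P \<or>
     (\<exists>a b. a \<noteq> 0 \<and> P \<inter> {x. a \<bullet> x = b} \<noteq> {} \<and>
        (P \<subseteq> {x. a \<bullet> x \<le> b} \<or> P \<subseteq> {x. a \<bullet> x \<ge> b}) \<and>
        T = P \<inter> {x. a \<bullet> x = b})"

definition polyhedral_complex :: "'a::euclidean_space set set \<Rightarrow> bool" where
  "polyhedral_complex \<C> \<longleftrightarrow> finite \<C> \<and> (\<forall>C\<in>\<C>. polyhedron C) \<and>
     (\<forall>C\<in>\<C>. \<forall>T. poly_face T C \<longrightarrow> T \<in> \<C>) \<and>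
     (\<forall>C1\<in>\<C>. \<forall>C2\<in>\<C>. poly_face (C1 \<inter> C2) C1 \<and> poly_face (C1 \<inter> C2) C2)"

definition cellwise_affine :: "'a::euclidean_space set set \<Rightarrow> ('a \<Rightarrow> real) \<Rightarrow> bool" where
  "cellwise_affine \<C> F \<longleftrightarrow> (\<forall>C\<in>\<C>. \<exists>u d. \<forall>x\<in>C. F x = u \<bullet> x + d)"

definition flat_cell :: "('a \<Rightarrow> real) \<Rightarrow> 'a set \<Rightarrow> bool" where
  "flat_cell F C \<longleftrightarrow> C \<noteq> {} \<and> (\<exists>k. \<forall>x\<in>C. F x = k)"

definition transversal_thresholds ::
    "'a::euclidean_space set set \<Rightarrow> ('a \<Rightarrow> real) \<Rightarrow> real \<Rightarrow> real \<Rightarrow> bool" where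
  "transversal_thresholds \<C> F a b \<longleftrightarrow>
     (\<forall>C\<in>\<C>. flat_cell F C \<longrightarrow> \<not> (F ` C \<subseteq> {a..b}))"

end

theory Submission
  imports Defs
begin

lemma polyhedron_rep:
  fixes D :: "'a::euclidean_space set"
  assumes "polyhedron D"
  obtains H and \<alpha> :: "'a set \<Rightarrow> 'a" and \<beta> where "finite H" "\<And>h. h \<in> H \<Longrightarrow> \<alpha> h \<noteq> 0"
    "D = {x. \<forall>h\<in>H. \<alpha> h \<bullet> x \<le> \<beta> h}"
proof -
  obtain H where H: "finite H" "D = \<Inter>H" "\<forall>h\<in>H. \<exists>a b. a \<noteq> 0 \<and> h = {x. a \<bullet> x \<le> b}"
    using assms unfolding polyhedron_def by blast
  then have "\<forall>h\<in>H. \<exists>p. fst p \<noteq> 0 \<and> h = {x. fst p \<bullet> x \<le> snd p}" by auto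
  then obtain f where f: "\<forall>h\<in>H. fst (f h) \<noteq> 0 \<and> h = {x. fst (f h) \<bullet> x \<le> snd (f h)}"
    by metis
  show ?thesis
  proof (rule that[of H "\<lambda>h. fst (f h)" "\<lambda>h. snd (f h)"])
    show "D = {x. \<forall>h\<in>H. fst (f h) \<bullet> x \<le> snd (f h)}"
      using H(2) f by blast
  qed (use H f in auto)
qed

lemma face_hyper:
  fixes E :: "'a::euclidean_space set"
  assumes "\<alpha> \<noteq> 0" "z \<in> E" "\<alpha> \<bullet> z = \<beta>" "\<forall>y\<in>E. \<alpha> \<bullet> y \<le> \<beta>"
  shows "poly_face (E \<inter> {y. \<alpha> \<bullet> y = \<beta>}) E"
  unfolding poly_face_def using assms by blast

lemma noC:
  fixes C :: "'a::euclidean_space set set"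
  assumes pc: "polyhedral_complex C" and ca: "cellwise_affine C F"
    and tt: "transversal_thresholds C F a c"
    and D: "D \<in> C" and Dc: "\<forall>x\<in>D. F x \<le> c"
  shows "\<forall>x\<in>D. F x \<le> a"
proof (rule ccontr)
  assume "\<not> (\<forall>x\<in>D. F x \<le> a)"
  define S where "S = {E \<in> C. E \<subseteq> D \<and> (\<exists>x\<in>E. F x > a)}"
  have "finite S" using pc unfolding polyhedral_complex_def S_def by auto
  moreover have "S \<noteq> {}" using D \<open>\<not> (\<forall>x\<in>D. F x \<le> a)\<close> unfolding S_def by force
  ultimately obtain E where E: "E \<in> S" and Emin: "\<And>T. T \<in> S \<Longrightarrow> T \<subseteq> E \<Longrightarrow> T = E"
    using finite_has_minimal by metis
  have EC: "E \<in> C" and ED: "E \<subseteq> D" using E S_def by auto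
  obtain x where xE: "x \<in> E" and Fx: "F x > a" using E S_def by auto
  obtain u d where ud: "\<forall>y\<in>E. F y = u \<bullet> y + d" using ca EC unfolding cellwise_affine_def by blast
  have Ec: "\<forall>y\<in>E. F y \<le> c" using Dc ED by auto
  have faceC: "T \<in> C" if "poly_face T E" for T
    using pc EC that unfolding polyhedral_complex_def by blast
  show False
  proof (cases "\<forall>y\<in>E. F y \<le> F x")
    case True
    define T where "T = E \<inter> {y. F y = F x}"
    have "poly_face T E"
    proof (cases "u = 0")
      case True
      then have "T = E" using ud xE unfolding T_def by auto
      then show ?thesis unfolding poly_face_def by auto
    next
      case False
      have "T = E \<inter> {y. u \<bullet> y = F x - d}" using ud xE unfolding T_def by auto
      moreover have "poly_face (E \<inter> {y. u \<bullet> y = F x - d}) E"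
        by (rule face_hyper) (use False xE ud True in auto)
      ultimately show ?thesis by simp
    qed
    then have "T \<in> C" by (rule faceC)
    moreover have "flat_cell F T" unfolding flat_cell_def T_def using xE by auto
    moreover have "F ` T \<subseteq> {a..c}" unfolding T_def using Fx xE Ec by auto
    ultimately show False using tt unfolding transversal_thresholds_def by blast
  next
    case False
    then obtain y where yE: "y \<in> E" and Fy: "F y > F x" by force
    have "polyhedron E" using pc EC unfolding polyhedral_complex_def by blast
    then obtain H and \<alpha> :: "'a set \<Rightarrow> 'a" and \<beta> where H: "finite H" "\<And>h. h \<in> H \<Longrightarrow> \<alpha> h \<noteq> 0"
      and Eeq: "E = {x. \<forall>h\<in>H. \<alpha> h \<bullet> x \<le> \<beta> h}"
      using polyhedron_rep[OF \<open>polyhedron E\<close>] by blast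
    define Kc where "Kc = {h\<in>H. \<alpha> h \<bullet> (y - x) > 0}"
    define \<rho> where "\<rho> h = (\<beta> h - \<alpha> h \<bullet> x) / (\<alpha> h \<bullet> (y - x))" for h
    have Fline: "F (x + t *\<^sub>R (y - x)) = F x + t * (F y - F x)" if "x + t *\<^sub>R (y - x) \<in> E" for t
      using ud that xE yE by (simp add: inner_add_right inner_diff_right algebra_simps)
    show False
    proof (cases "Kc = {}")
      case True
      define t where "t = (c - F x) / (F y - F x) + 1"
      have tpos: "t \<ge> 0"
      proof -
        have "F x \<le> c" using Ec xE by auto
        then show ?thesis unfolding t_def using Fy by (simp add: field_simps)
      qed
      have "x + t *\<^sub>R (y - x) \<in> E"
      proof -
        have "\<alpha> h \<bullet> (x + t *\<^sub>R (y - x)) \<le> \<beta> h" if "h \<in> H" for h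
        proof -
          have "\<alpha> h \<bullet> (y - x) \<le> 0" using True that Kc_def by force
          then have "t * (\<alpha> h \<bullet> (y - x)) \<le> 0" using tpos by (simp add: mult_nonneg_nonpos)
          moreover have "\<alpha> h \<bullet> x \<le> \<beta> h" using xE Eeq that by auto
          ultimately show ?thesis by (simp add: inner_add_right)
        qed
        then show ?thesis using Eeq by auto
      qed
      then have "F (x + t *\<^sub>R (y - x)) = F x + t * (F y - F x)" by (rule Fline)
      also have "\<dots> = c + (F y - F x)" unfolding t_def using Fy by (simp add: field_simps)
      also have "\<dots> > c" using Fy by simp
      finally have "F (x + t *\<^sub>R (y - x)) > c" .
      then show False using Ec \<open>x + t *\<^sub>R (y - x) \<in> E\<close> by fastforce
    next
      case False
      have "finite Kc" using H(1) Kc_def by auto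
      then have "Min (\<rho> ` Kc) \<in> \<rho> ` Kc" using False by simp
      then obtain h where hK: "h \<in> Kc" and hm: "\<rho> h = Min (\<rho> ` Kc)" by auto
      have hmin: "\<And>h'. h' \<in> Kc \<Longrightarrow> \<rho> h \<le> \<rho> h'"
        unfolding hm using \<open>finite Kc\<close> by simp
      have hH: "h \<in> H" and hpos: "\<alpha> h \<bullet> (y - x) > 0" using hK Kc_def by auto
      define z where "z = x + \<rho> h *\<^sub>R (y - x)"
      have xin: "\<And>h'. h' \<in> H \<Longrightarrow> \<alpha> h' \<bullet> x \<le> \<beta> h'" using xE Eeq by auto
      have yin: "\<And>h'. h' \<in> H \<Longrightarrow> \<alpha> h' \<bullet> y \<le> \<beta> h'" using yE Eeq by auto
      have rho1: "\<rho> h \<ge> 1"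
        using yin[OF hH] hpos unfolding \<rho>_def by (simp add: field_simps inner_diff_right)
      have zE: "z \<in> E"
      proof -
        have "\<alpha> h' \<bullet> z \<le> \<beta> h'" if "h' \<in> H" for h'
        proof (cases "h' \<in> Kc")
          case True
          then have p: "\<alpha> h' \<bullet> (y - x) > 0" using Kc_def by auto
          have "\<rho> h * (\<alpha> h' \<bullet> (y - x)) \<le> \<rho> h' * (\<alpha> h' \<bullet> (y - x))"
            using hmin[OF True] p by (simp add: mult_right_mono)
          also have "\<dots> = \<beta> h' - \<alpha> h' \<bullet> x" unfolding \<rho>_def using p by simp
          finally show ?thesis unfolding z_def by (simp add: inner_add_right)
        next
          case False
          then have "\<alpha> h' \<bullet> (y - x) \<le> 0" using that Kc_def by auto
          then have "\<rho> h * (\<alpha> h' \<bullet> (y - x)) \<le> 0" using rho1 by (simp add: mult_nonneg_nonpos)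
          then show ?thesis unfolding z_def using xin[OF that] by (simp add: inner_add_right)
        qed
        then show ?thesis using Eeq by auto
      qed
      have zeq: "\<alpha> h \<bullet> z = \<beta> h" unfolding z_def \<rho>_def using hpos by (simp add: inner_add_right)
      have Fz: "F z > a"
      proof -
        have "F z = F x + \<rho> h * (F y - F x)" unfolding z_def by (rule Fline) (use zE z_def in simp)
        moreover have "\<rho> h * (F y - F x) \<ge> 1 * (F y - F x)" using rho1 Fy
          by (intro mult_right_mono) auto
        then have "\<rho> h * (F y - F x) \<ge> F y - F x" by simp
        ultimately show ?thesis using Fy Fx by linarith
      qed
      define T where "T = E \<inter> {w. \<alpha> h \<bullet> w = \<beta> h}"
      have "poly_face T E" unfolding T_def
        by (rule face_hyper) (use H(2)[OF hH] zE zeq Eeq hH in auto)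
      then have "T \<in> C" by (rule faceC)
      then have "T \<in> S" unfolding S_def T_def using ED zE zeq Fz by auto
      then have "T = E" using Emin[of T] unfolding T_def by blast
      moreover have "x \<notin> T" unfolding T_def using yin[OF hH] hpos by (simp add: inner_diff_right)
      ultimately show False using xE by simp
    qed
  qed
qed

lemma cont_Max0:
  fixes f :: "'b \<Rightarrow> 'c::topological_space \<Rightarrow> real"
  assumes "finite J" "\<And>j. j \<in> J \<Longrightarrow> continuous_on S (f j)"
  shows "continuous_on S (\<lambda>x. Max (insert 0 ((\<lambda>j. f j x) ` J)))"
  using assms
proof (induction J rule: finite_induct)
  case empty
  then show ?case by simp
next
  case (insert j J)
  have eq: "Max (insert 0 ((\<lambda>j. f j x) ` insert j J)) = max (f j x) (Max (insert 0 ((\<lambda>j. f j x) ` J)))" for x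
  proof -
    have "insert 0 ((\<lambda>j. f j x) ` insert j J) = insert (f j x) (insert 0 ((\<lambda>j. f j x) ` J))" by auto
    then show ?thesis using insert.hyps by simp
  qed
  show ?case unfolding eq
    by (intro continuous_on_max insert.IH) (use insert.prems in auto)
qed

lemma proper_face_tight:
  fixes D :: "'a::euclidean_space set"
  assumes Deq: "D = {x. \<forall>h\<in>H. \<alpha> h \<bullet> x \<le> \<beta> h}" and fin: "finite H" and JH: "J \<subseteq> H"
    and tight: "\<And>h w. h \<in> H \<Longrightarrow> h \<notin> J \<Longrightarrow> w \<in> D \<Longrightarrow> \<alpha> h \<bullet> w = \<beta> h"
    and T: "poly_face T D" "T \<noteq> D" "x \<in> T"
  shows "\<exists>h\<in>J. \<alpha> h \<bullet> x = \<beta> h"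
proof (rule ccontr)
  assume "\<not> (\<exists>h\<in>J. \<alpha> h \<bullet> x = \<beta> h)"
  obtain \<gamma> \<delta> where T': "T = D \<inter> {y. \<gamma> \<bullet> y = \<delta>}" and side: "D \<subseteq> {y. \<gamma> \<bullet> y \<le> \<delta>} \<or> D \<subseteq> {y. \<gamma> \<bullet> y \<ge> \<delta>}"
    using T unfolding poly_face_def by blast
  have xD: "x \<in> D" and xg: "\<gamma> \<bullet> x = \<delta>" using T' T by auto
  have strict: "\<alpha> h \<bullet> x < \<beta> h" if "h \<in> J" for h
    using xD Deq that JH \<open>\<not> (\<exists>h\<in>J. \<alpha> h \<bullet> x = \<beta> h)\<close> by force
  have "\<gamma> \<bullet> w = \<delta>" if wD: "w \<in> D" for w
  proof -
    define \<epsilon> where "\<epsilon> = Min (insert 1 ((\<lambda>h. (\<beta> h - \<alpha> h \<bullet> x) / (\<bar>\<alpha> h \<bullet> (x - w)\<bar> + 1)) ` J))"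
    have finJ: "finite J" using fin JH finite_subset by blast
    have epos: "\<epsilon> > 0" unfolding \<epsilon>_def using finJ strict by (auto simp: Min_gr_iff)
    have ele: "\<epsilon> \<le> (\<beta> h - \<alpha> h \<bullet> x) / (\<bar>\<alpha> h \<bullet> (x - w)\<bar> + 1)" if "h \<in> J" for h
      unfolding \<epsilon>_def using finJ that by (intro Min_le) auto
    define z where "z = x + \<epsilon> *\<^sub>R (x - w)"
    have zD: "z \<in> D"
    proof -
      have "\<alpha> h \<bullet> z \<le> \<beta> h" if "h \<in> H" for h
      proof (cases "h \<in> J")
        case True
        have "\<epsilon> * (\<bar>\<alpha> h \<bullet> (x - w)\<bar> + 1) \<le> \<beta> h - \<alpha> h \<bullet> x"
          using ele[OF True] by (simp add: field_simps)
        moreover have "\<epsilon> * (\<alpha> h \<bullet> (x - w)) \<le> \<epsilon> * (\<bar>\<alpha> h \<bullet> (x - w)\<bar> + 1)"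
          using epos by (intro mult_left_mono) auto
        ultimately show ?thesis unfolding z_def by (simp add: inner_add_right)
      next
        case False
        then have "\<alpha> h \<bullet> x = \<beta> h" "\<alpha> h \<bullet> w = \<beta> h" using tight that xD wD by auto
        then show ?thesis unfolding z_def by (simp add: inner_add_right inner_diff_right)
      qed
      then show ?thesis using Deq by auto
    qed
    have gz: "\<gamma> \<bullet> z = \<delta> + \<epsilon> * (\<delta> - \<gamma> \<bullet> w)" unfolding z_def using xg
      by (simp add: inner_add_right inner_diff_right)
    from side show ?thesis
    proof
      assume "D \<subseteq> {y. \<gamma> \<bullet> y \<le> \<delta>}"
      then have "\<gamma> \<bullet> z \<le> \<delta>" "\<gamma> \<bullet> w \<le> \<delta>" using zD wD by auto
      then have "\<epsilon> * (\<delta> - \<gamma> \<bullet> w) \<le> 0" "\<delta> - \<gamma> \<bullet> w \<ge> 0" using gz by auto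
      then show ?thesis using epos by (simp add: mult_le_0_iff)
    next
      assume "D \<subseteq> {y. \<gamma> \<bullet> y \<ge> \<delta>}"
      then have "\<gamma> \<bullet> z \<ge> \<delta>" "\<gamma> \<bullet> w \<ge> \<delta>" using zD wD by auto
      then have "\<epsilon> * (\<delta> - \<gamma> \<bullet> w) \<ge> 0" "\<delta> - \<gamma> \<bullet> w \<le> 0" using gz by auto
      then show ?thesis using epos by (simp add: zero_le_mult_iff)
    qed
  qed
  then have "T = D" using T' by auto
  then show False using T by simp
qed

lemma cellB:
  fixes D :: "'a::euclidean_space set"
  assumes poly: "polyhedron D" and aff: "\<forall>x\<in>D. F x = u \<bullet> x + d" and ac: "a \<le> c"
    and qD: "q \<in> D" and Fq: "F q > c"
  obtains r where "continuous_on {x\<in>D. F x \<le> c} r"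
    "\<And>x. x \<in> {x\<in>D. F x \<le> c} \<Longrightarrow> closed_segment x (r x) \<subseteq> {x\<in>D. F x \<le> c}"
    "\<And>x. x \<in> {x\<in>D. F x \<le> c} \<Longrightarrow> F (r x) \<le> a \<or> (\<exists>T. poly_face T D \<and> T \<noteq> D \<and> r x \<in> T)"
    "\<And>x. x \<in> {x\<in>D. F x \<le> c} \<Longrightarrow> F x \<le> a \<or> (\<exists>T. poly_face T D \<and> T \<noteq> D \<and> x \<in> T) \<Longrightarrow> r x = x"
proof -
  define Dc where "Dc = {x\<in>D. F x \<le> c}"
  have cvx: "convex D" using poly polyhedron_imp_convex by blast
  have "rel_interior D \<noteq> {}" using cvx qD rel_interior_eq_empty by blast
  then obtain p0 where p0: "p0 \<in> rel_interior D" by blast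
  have p0D: "p0 \<in> D" using p0 rel_interior_subset by blast
  obtain p where pri: "p \<in> rel_interior D" and Fp: "F p > c"
  proof (cases "F p0 > c")
    case True
    then show ?thesis using that p0 by blast
  next
    case False
    define e where "e = (F q - c) / (2 * (F q - F p0))"
    have e0: "e > 0" "e \<le> 1" using False Fq unfolding e_def by (auto simp: field_simps)
    have pin: "q - e *\<^sub>R (q - p0) \<in> rel_interior D"
      by (rule rel_interior_closure_convex_shrink[OF cvx p0]) (use qD closure_subset e0 in auto)
    then have "q - e *\<^sub>R (q - p0) \<in> D" using rel_interior_subset by blast
    then have "F (q - e *\<^sub>R (q - p0)) = F q - e * (F q - F p0)"
      using aff qD p0D by (simp add: inner_diff_right algebra_simps)
    also have "\<dots> = F q - (F q - c) / 2" unfolding e_def using False Fq by (simp add: field_simps)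
    also have "\<dots> > c" using Fq by (simp add: field_simps)
    finally show ?thesis using that pin by blast
  qed
  have pD: "p \<in> D" using pri rel_interior_subset by blast
  obtain H and \<alpha> :: "'a set \<Rightarrow> 'a" and \<beta> where H: "finite H" "\<And>h. h \<in> H \<Longrightarrow> \<alpha> h \<noteq> 0"
      and Deq: "D = {x. \<forall>h\<in>H. \<alpha> h \<bullet> x \<le> \<beta> h}"
    using polyhedron_rep[OF poly] by blast
  define J where "J = {h\<in>H. \<alpha> h \<bullet> p < \<beta> h}"
  have JH: "J \<subseteq> H" and finJ: "finite J" using H(1) J_def by auto
  have inD: "\<And>h w. h \<in> H \<Longrightarrow> w \<in> D \<Longrightarrow> \<alpha> h \<bullet> w \<le> \<beta> h" using Deq by auto
  have tight: "\<alpha> h \<bullet> w = \<beta> h" if tw: "h \<in> H" "h \<notin> J" "w \<in> D" for h w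
  proof -
    have hp: "\<alpha> h \<bullet> p = \<beta> h" using that J_def inD[OF _ pD] by force
    obtain e where e: "e > 1" "(1 - e) *\<^sub>R w + e *\<^sub>R p \<in> D"
      using convex_rel_interior_iff[OF cvx] pri tw(3) by blast
    have "\<alpha> h \<bullet> ((1 - e) *\<^sub>R w + e *\<^sub>R p) \<le> \<beta> h" using inD[OF tw(1) e(2)] .
    then have "(1 - e) * (\<alpha> h \<bullet> w - \<beta> h) \<le> 0" using hp by (simp add: inner_add_right algebra_simps)
    then have "\<alpha> h \<bullet> w - \<beta> h \<ge> 0" using e(1) by (simp add: mult_le_0_iff)
    then show ?thesis using inD[OF tw(1) tw(3)] by simp
  qed
  define Fp where "Fp = u \<bullet> p + d"
  have FpF: "Fp = F p" using aff pD Fp_def by simp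
  define s where "s x = (Fp - (u \<bullet> x + d)) / (Fp - a)" for x
  define gi where "gi h x = (\<alpha> h \<bullet> (x - p)) / (\<beta> h - \<alpha> h \<bullet> p)" for h x
  define g where "g x = Max (insert 0 ((\<lambda>h. gi h x) ` J))" for x
  define \<sigma> where "\<sigma> x = min 1 (max (s x) (g x))" for x
  define r where "r x = p + (1 / \<sigma> x) *\<^sub>R (x - p)" for x
  have Fpa: "Fp - a > 0" using Fp FpF ac by simp
  have Jpos: "\<beta> h - \<alpha> h \<bullet> p > 0" if "h \<in> J" for h using that J_def by auto
  have Fx: "F x = u \<bullet> x + d" if "x \<in> Dc" for x using aff that Dc_def by auto
  have spos: "s x > 0" if "x \<in> Dc" for x
  proof -
    have "u \<bullet> x + d < Fp" using Fx[OF that] that Dc_def Fp FpF by auto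
    then show ?thesis unfolding s_def using Fpa by simp
  qed
  have g0: "g x \<ge> 0" for x unfolding g_def using finJ by simp
  have gig: "gi h x \<le> g x" if "h \<in> J" for h x unfolding g_def using finJ that by simp
  have gcases: "g x = 0 \<or> (\<exists>h\<in>J. g x = gi h x)" for x
  proof -
    have "g x \<in> insert 0 ((\<lambda>h. gi h x) ` J)" unfolding g_def using finJ by (intro Max_in) auto
    then show ?thesis by auto
  qed
  have gi1: "gi h x \<le> 1" if "h \<in> J" "x \<in> D" for h x
    using inD[of h x] that JH Jpos[OF that(1)] unfolding gi_def by (auto simp: field_simps inner_diff_right)
  have sigpos: "\<sigma> x > 0" "\<sigma> x \<le> 1" if "x \<in> Dc" for x
    using spos[OF that] g0[of x] unfolding \<sigma>_def by auto
  have ar: "\<alpha> h \<bullet> r x = \<alpha> h \<bullet> p + (\<alpha> h \<bullet> (x - p)) / \<sigma> x" for h x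
    unfolding r_def by (simp add: inner_add_right)
  have aJ: "\<alpha> h \<bullet> (x - p) = gi h x * (\<beta> h - \<alpha> h \<bullet> p)" if "h \<in> J" for h x
    unfolding gi_def using Jpos[OF that] by simp
  have rD: "r x \<in> D" if xc: "x \<in> Dc" for x
  proof -
    have xD: "x \<in> D" using xc Dc_def by auto
    have "\<alpha> h \<bullet> r x \<le> \<beta> h" if hH: "h \<in> H" for h
    proof (cases "h \<in> J")
      case True
      have "gi h x \<le> \<sigma> x" unfolding \<sigma>_def using gig[OF True, of x] gi1[OF True xD] by auto
      then have "gi h x / \<sigma> x \<le> 1" using sigpos[OF xc] by (simp add: field_simps)
      then have "gi h x / \<sigma> x * (\<beta> h - \<alpha> h \<bullet> p) \<le> 1 * (\<beta> h - \<alpha> h \<bullet> p)"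
        using Jpos[OF True] by (intro mult_right_mono) auto
      then show ?thesis unfolding ar aJ[OF True] by (simp add: field_simps)
    next
      case False
      then have "\<alpha> h \<bullet> (x - p) = 0" using tight[OF hH False] xD pD by (simp add: inner_diff_right)
      then show ?thesis unfolding ar using tight[OF hH False pD] by simp
    qed
    then show ?thesis using Deq by auto
  qed
  have Fr: "F (r x) = Fp - (Fp - F x) / \<sigma> x" if xc: "x \<in> Dc" for x
  proof -
    have "F (r x) = u \<bullet> r x + d" using aff rD[OF xc] by simp
    also have "\<dots> = Fp - (Fp - F x) / \<sigma> x"
      unfolding r_def Fp_def Fx[OF xc] using sigpos[OF xc] by (simp add: inner_add_right inner_diff_right field_simps)
    finally show ?thesis .
  qed
  have Frle: "F (r x) \<le> F x" if xc: "x \<in> Dc" for x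
  proof -
    have "Fp - F x > 0" using Fx[OF xc] xc Dc_def Fp FpF by auto
    then have "(Fp - F x) * \<sigma> x \<le> (Fp - F x) * 1" using sigpos[OF xc] by (intro mult_left_mono) auto
    then have "(Fp - F x) / \<sigma> x \<ge> Fp - F x" using sigpos[OF xc] by (simp add: field_simps)
    then show ?thesis unfolding Fr[OF xc] by simp
  qed
  have facei: "poly_face (D \<inter> {y. \<alpha> h \<bullet> y = \<beta> h}) D \<and> D \<inter> {y. \<alpha> h \<bullet> y = \<beta> h} \<noteq> D"
    if "h \<in> J" "z \<in> D" "\<alpha> h \<bullet> z = \<beta> h" for h z
  proof
    show "poly_face (D \<inter> {y. \<alpha> h \<bullet> y = \<beta> h}) D"
      by (rule face_hyper) (use that H(2) JH inD in auto)
    have "p \<notin> D \<inter> {y. \<alpha> h \<bullet> y = \<beta> h}" using that(1) J_def by auto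
    then show "D \<inter> {y. \<alpha> h \<bullet> y = \<beta> h} \<noteq> D" using pD by blast
  qed
  have r1: "r x = x" if "\<sigma> x = 1" for x unfolding r_def that by simp
  have sig1: "\<sigma> x = 1" if xc: "x \<in> Dc" and "F x \<le> a \<or> (\<exists>T. poly_face T D \<and> T \<noteq> D \<and> x \<in> T)" for x
    using that(2)
  proof
    assume "F x \<le> a"
    then have "s x \<ge> 1" unfolding s_def using Fpa Fx[OF xc] by (simp add: field_simps)
    then show ?thesis unfolding \<sigma>_def by simp
  next
    assume "\<exists>T. poly_face T D \<and> T \<noteq> D \<and> x \<in> T"
    then obtain T where T: "poly_face T D" "T \<noteq> D" "x \<in> T" by blast
    obtain h where hJ: "h \<in> J" and hx: "\<alpha> h \<bullet> x = \<beta> h"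
      using proper_face_tight[OF Deq H(1) JH tight T] by blast
    have "gi h x = 1" unfolding gi_def using hx Jpos[OF hJ] by (simp add: inner_diff_right)
    then have "g x \<ge> 1" using gig[OF hJ, of x] by simp
    then show ?thesis unfolding \<sigma>_def by simp
  qed
  show ?thesis
  proof (rule that)
    show "continuous_on {x\<in>D. F x \<le> c} r"
      unfolding Dc_def[symmetric] r_def
    proof (intro continuous_intros)
      have cg: "continuous_on Dc (gi h)" if "h \<in> J" for h
        unfolding gi_def using Jpos[OF that] by (intro continuous_intros) auto
      show "continuous_on Dc \<sigma>" unfolding \<sigma>_def s_def g_def
        by (intro continuous_intros cont_Max0 finJ cg) (use Fpa in auto)
      show "\<forall>x\<in>Dc. \<sigma> x \<noteq> 0" using sigpos by force
    qed
    fix x assume "x \<in> {x\<in>D. F x \<le> c}"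
    then have xc: "x \<in> Dc" unfolding Dc_def .
    have xD: "x \<in> D" using xc Dc_def by auto
    show "closed_segment x (r x) \<subseteq> {x\<in>D. F x \<le> c}"
    proof
      fix y assume "y \<in> closed_segment x (r x)"
      then obtain t where t: "0 \<le> t" "t \<le> 1" "y = (1 - t) *\<^sub>R x + t *\<^sub>R r x"
        unfolding closed_segment_def by auto
      have yD: "y \<in> D" using convexD[OF cvx xD rD[OF xc], of "1 - t" t] t by simp
      have "F y = u \<bullet> y + d" using aff yD by simp
      also have "\<dots> = (1 - t) * (u \<bullet> x + d) + t * (u \<bullet> r x + d)"
        unfolding t(3) by (simp add: inner_add_right algebra_simps)
      also have "\<dots> = (1 - t) * F x + t * F (r x)" using aff xD rD[OF xc] by simp
      also have "\<dots> \<le> (1 - t) * F x + t * F x" using Frle[OF xc] t by (simp add: mult_left_mono)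
      also have "\<dots> \<le> c" using xc Dc_def by (simp add: algebra_simps)
      finally show "y \<in> {x\<in>D. F x \<le> c}" using yD by simp
    qed
    show "F (r x) \<le> a \<or> (\<exists>T. poly_face T D \<and> T \<noteq> D \<and> r x \<in> T)"
    proof (cases "\<sigma> x = 1")
      case True
      then have rx: "r x = x" by (rule r1)
      have "max (s x) (g x) \<ge> 1" using True unfolding \<sigma>_def min_def by (simp split: if_splits)
      then consider "s x \<ge> 1" | "g x \<ge> 1" by linarith
      then show ?thesis
      proof cases
        case 1
        then have "F x \<le> a" unfolding s_def using Fpa Fx[OF xc] by (simp add: field_simps)
        then show ?thesis using rx by simp
      next
        case 2
        then obtain h where hJ: "h \<in> J" and gh: "g x = gi h x" using gcases[of x] by auto
        then have "gi h x = 1" using 2 gi1[OF hJ xD] by simp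
        then have "\<alpha> h \<bullet> x = \<beta> h" unfolding gi_def using Jpos[OF hJ] by (simp add: field_simps inner_diff_right)
        then have xh: "\<alpha> h \<bullet> x = \<beta> h" .
        have "poly_face (D \<inter> {y. \<alpha> h \<bullet> y = \<beta> h}) D" "D \<inter> {y. \<alpha> h \<bullet> y = \<beta> h} \<noteq> D"
          using facei[OF hJ xD xh] by auto
        moreover have "r x \<in> D \<inter> {y. \<alpha> h \<bullet> y = \<beta> h}" using xD xh rx by simp
        ultimately show ?thesis by blast
      qed
    next
      case False
      then have sm: "\<sigma> x = max (s x) (g x)" unfolding \<sigma>_def min_def by (simp split: if_splits)
      show ?thesis
      proof (cases "s x \<ge> g x")
        case True
        then have ss: "\<sigma> x = s x" using sm by (simp add: max_def)
        have sx: "Fp - F x = s x * (Fp - a)" unfolding s_def using Fpa Fx[OF xc] by simp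
        have "(Fp - F x) / \<sigma> x = Fp - a" unfolding ss sx using spos[OF xc] by simp
        then have "F (r x) = a" unfolding Fr[OF xc] by simp
        then show ?thesis by simp
      next
        case False
        then have gs: "g x > s x" by simp
        then have "g x \<noteq> 0" using spos[OF xc] by simp
        then obtain h where hJ: "h \<in> J" and gh: "g x = gi h x" using gcases[of x] by blast
        have sg: "\<sigma> x = gi h x" unfolding sm gh[symmetric] using gs by simp
        have gpos: "gi h x > 0" using sigpos[OF xc] sg by simp
        have "\<alpha> h \<bullet> r x = \<alpha> h \<bullet> p + (gi h x * (\<beta> h - \<alpha> h \<bullet> p)) / gi h x"
          unfolding ar aJ[OF hJ] sg by simp
        also have "\<dots> = \<beta> h" using gpos by simp
        finally have rh: "\<alpha> h \<bullet> r x = \<beta> h" .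
        have "poly_face (D \<inter> {y. \<alpha> h \<bullet> y = \<beta> h}) D" "D \<inter> {y. \<alpha> h \<bullet> y = \<beta> h} \<noteq> D"
          using facei[OF hJ rD[OF xc] rh] by auto
        moreover have "r x \<in> D \<inter> {y. \<alpha> h \<bullet> y = \<beta> h}" using rD[OF xc] rh by simp
        ultimately show ?thesis by blast
      qed
    qed
    assume "F x \<le> a \<or> (\<exists>T. poly_face T D \<and> T \<noteq> D \<and> x \<in> T)"
    then show "r x = x" using r1 sig1 xc by blast
  qed
qed

definition Ylev :: "'a::euclidean_space set set \<Rightarrow> ('a \<Rightarrow> real) \<Rightarrow> real \<Rightarrow> real \<Rightarrow> 'a set set \<Rightarrow> 'a set" where
  "Ylev C F a c K = {x \<in> \<Union>C. F x \<le> a} \<union> (\<Union>E\<in>K. {x\<in>E. F x \<le> c})"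

lemma closed_sub:
  assumes pc: "polyhedral_complex C" and ca: "cellwise_affine C F" and E: "E \<in> C"
  shows "closed {x\<in>E. F x \<le> t}"
proof -
  obtain u d where ud: "\<forall>y\<in>E. F y = u \<bullet> y + d" using ca E unfolding cellwise_affine_def by blast
  have "{x\<in>E. F x \<le> t} = E \<inter> {x. u \<bullet> x \<le> t - d}" using ud by auto
  moreover have "closed E" using pc E polyhedron_imp_closed unfolding polyhedral_complex_def by blast
  ultimately show ?thesis by (simp add: closed_Int closed_halfspace_le)
qed

lemma closed_Ylev:
  assumes pc: "polyhedral_complex C" and ca: "cellwise_affine C F" and KC: "K \<subseteq> C"
  shows "closed (Ylev C F a c K)"
proof -
  have fin: "finite C" using pc unfolding polyhedral_complex_def by blast
  have "{x \<in> \<Union>C. F x \<le> a} = (\<Union>E\<in>C. {x\<in>E. F x \<le> a})" by auto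
  moreover have "closed (\<Union>E\<in>C. {x\<in>E. F x \<le> a})"
    using fin closed_sub[OF pc ca] by (intro closed_UN) auto
  moreover have "closed (\<Union>E\<in>K. {x\<in>E. F x \<le> c})"
    using fin KC finite_subset closed_sub[OF pc ca] by (intro closed_UN) auto
  ultimately show ?thesis unfolding Ylev_def by (simp add: closed_Un)
qed

lemma cell_retract:
  fixes C :: "'a::euclidean_space set set"
  assumes pc: "polyhedral_complex C" and ca: "cellwise_affine C F"
    and tt: "transversal_thresholds C F a c" and ac: "a \<le> c" and DC: "D \<in> C"
  obtains r where "continuous_on {x\<in>D. F x \<le> c} r"
    "\<And>x. x \<in> {x\<in>D. F x \<le> c} \<Longrightarrow> closed_segment x (r x) \<subseteq> {x\<in>D. F x \<le> c}"
    "\<And>x. x \<in> {x\<in>D. F x \<le> c} \<Longrightarrow> F (r x) \<le> a \<or> (\<exists>T. poly_face T D \<and> T \<noteq> D \<and> r x \<in> T)"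
    "\<And>x. x \<in> {x\<in>D. F x \<le> c} \<Longrightarrow> F x \<le> a \<or> (\<exists>T. poly_face T D \<and> T \<noteq> D \<and> x \<in> T) \<Longrightarrow> r x = x"
proof (cases "\<exists>q\<in>D. F q > c")
  case True
  then obtain q where q: "q \<in> D" "F q > c" by blast
  obtain u d where ud: "\<forall>y\<in>D. F y = u \<bullet> y + d" using ca DC unfolding cellwise_affine_def by blast
  have polyD: "polyhedron D" using pc DC unfolding polyhedral_complex_def by blast
  show ?thesis by (rule cellB[OF polyD ud ac q], rule that, assumption+)
next
  case False
  then have "\<forall>x\<in>D. F x \<le> a" using noC[OF pc ca tt DC] by (simp add: not_less)
  then show ?thesis
    by (intro that[of id]) auto
qed

lemma step:
  fixes C :: "'a::euclidean_space set set"
  assumes pc: "polyhedral_complex C" and ca: "cellwise_affine C F"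
    and tt: "transversal_thresholds C F a c" and ac: "a \<le> c"
    and KC: "K \<subseteq> C" and Kface: "\<forall>E\<in>K. \<forall>T. poly_face T E \<longrightarrow> T \<in> K"
    and DK: "D \<in> K" and Dmax: "\<forall>E\<in>K. D \<subseteq> E \<longrightarrow> E = D"
  shows "Ylev C F a c K homotopy_eqv Ylev C F a c (K - {D})"
proof -
  have DC: "D \<in> C" using DK KC by blast
  obtain rD where rcont: "continuous_on {x\<in>D. F x \<le> c} rD"
    and rseg: "\<And>x. x \<in> {x\<in>D. F x \<le> c} \<Longrightarrow> closed_segment x (rD x) \<subseteq> {x\<in>D. F x \<le> c}"
    and rtgt: "\<And>x. x \<in> {x\<in>D. F x \<le> c} \<Longrightarrow> F (rD x) \<le> a \<or> (\<exists>T. poly_face T D \<and> T \<noteq> D \<and> rD x \<in> T)"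
    and rfix: "\<And>x. x \<in> {x\<in>D. F x \<le> c} \<Longrightarrow> F x \<le> a \<or> (\<exists>T. poly_face T D \<and> T \<noteq> D \<and> x \<in> T) \<Longrightarrow> rD x = x"
    using cell_retract[OF pc ca tt ac DC] by blast
  define Dc where "Dc = {x\<in>D. F x \<le> c}"
  define Y where "Y = Ylev C F a c K"
  define Y' where "Y' = Ylev C F a c (K - {D})"
  have YU: "Y = Dc \<union> Y'" unfolding Y_def Y'_def Dc_def Ylev_def using DK by blast
  have clD: "closed Dc" unfolding Dc_def by (rule closed_sub[OF pc ca DC])
  have clY': "closed Y'" unfolding Y'_def using KC by (intro closed_Ylev[OF pc ca]) auto
  have fixY: "rD x = x" if "x \<in> Dc" "x \<in> Y'" for x
  proof (rule rfix)
    show "x \<in> {x\<in>D. F x \<le> c}" using that Dc_def by simp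
    from \<open>x \<in> Y'\<close> consider "F x \<le> a" | E where "E \<in> K" "E \<noteq> D" "x \<in> E"
      unfolding Y'_def Ylev_def by blast
    then show "F x \<le> a \<or> (\<exists>T. poly_face T D \<and> T \<noteq> D \<and> x \<in> T)"
    proof cases
      case 1 then show ?thesis by simp
    next
      case 2
      have "poly_face (D \<inter> E) D" using pc DC KC \<open>E \<in> K\<close> unfolding polyhedral_complex_def by blast
      moreover have "D \<inter> E \<noteq> D" using Dmax 2 by blast
      moreover have "x \<in> D \<inter> E" using that(1) Dc_def 2 by blast
      ultimately show ?thesis by blast
    qed
  qed
  have mapsY: "rD x \<in> Y'" if xD: "x \<in> Dc" for x
  proof -
    have rDc: "rD x \<in> Dc" using rseg[of x] xD Dc_def ends_in_segment(2) by blast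
    from rtgt[of x] xD consider "F (rD x) \<le> a" | T where "poly_face T D" "T \<noteq> D" "rD x \<in> T"
      unfolding Dc_def by blast
    then show ?thesis
    proof cases
      case 1
      then show ?thesis using rDc DC unfolding Y'_def Ylev_def Dc_def by blast
    next
      case 2
      then have "T \<in> K" using Kface DK by blast
      then show ?thesis using 2 rDc unfolding Y'_def Ylev_def Dc_def by blast
    qed
  qed
  define r where "r x = (if x \<in> Dc then rD x else x)" for x
  have rc: "continuous_on Y r"
    unfolding YU r_def
    by (rule continuous_on_cases[OF clD clY']) (use rcont Dc_def fixY in auto)
  have ret: "retraction Y Y' r"
    unfolding retraction_def
  proof (intro conjI)
    show "Y' \<subseteq> Y" using YU by blast
    show "continuous_on Y r" by (rule rc)
    show "r \<in> Y \<rightarrow> Y'" unfolding r_def using YU mapsY by auto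
    show "\<forall>x\<in>Y'. r x = x" unfolding r_def using fixY by auto
  qed
  have hom: "homotopic_with_canon (\<lambda>x. True) Y Y id r"
  proof (rule homotopic_with_linear)
    show "continuous_on Y id" by simp
    show "continuous_on Y r" by (rule rc)
    fix x assume "x \<in> Y"
    show "closed_segment (id x) (r x) \<subseteq> Y"
    proof (cases "x \<in> Dc")
      case True
      then show ?thesis using rseg[of x] unfolding r_def Dc_def YU by auto
    next
      case False
      then show ?thesis using \<open>x \<in> Y\<close> unfolding r_def by simp
    qed
  qed
  show ?thesis
    using deformation_retract_imp_homotopy_eqv[OF hom ret] unfolding Y_def Y'_def .
qed

lemma main_le:
  fixes C :: "'a::euclidean_space set set"
  assumes pc: "polyhedral_complex C" and ca: "cellwise_affine C F"
    and tt: "transversal_thresholds C F a c" and ac: "a \<le> c"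
  shows "{x \<in> \<Union>C. F x \<le> c} homotopy_eqv {x \<in> \<Union>C. F x \<le> a}"
proof -
  have finC: "finite C" using pc unfolding polyhedral_complex_def by blast
  have gen: "Ylev C F a c K homotopy_eqv Ylev C F a c {}"
    if "K \<subseteq> C" "\<forall>E\<in>K. \<forall>T. poly_face T E \<longrightarrow> T \<in> K" for K
    using that
  proof (induction "card K" arbitrary: K rule: less_induct)
    case less
    show ?case
    proof (cases "K = {}")
      case True
      then show ?thesis by (simp add: homotopy_equivalent_space_refl)
    next
      case False
      have finK: "finite K" using less.prems finC finite_subset by blast
      obtain D where DK: "D \<in> K" and Dmax: "\<forall>E\<in>K. D \<subseteq> E \<longrightarrow> E = D"
        using finite_has_maximal[OF finK False] by blast
      have st: "Ylev C F a c K homotopy_eqv Ylev C F a c (K - {D})"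
        by (rule step[OF pc ca tt ac less.prems(1) less.prems(2) DK Dmax])
      have face': "\<forall>E\<in>K - {D}. \<forall>T. poly_face T E \<longrightarrow> T \<in> K - {D}"
      proof (intro ballI allI impI)
        fix E T assume E: "E \<in> K - {D}" and T: "poly_face T E"
        have "T \<in> K" using less.prems(2) E T by blast
        moreover have "T \<subseteq> E" using T unfolding poly_face_def by blast
        ultimately show "T \<in> K - {D}" using Dmax E by blast
      qed
      have "card (K - {D}) < card K" by (rule card_Diff1_less[OF finK DK])
      then have "Ylev C F a c (K - {D}) homotopy_eqv Ylev C F a c {}"
        using less.hyps less.prems(1) face' by blast
      then show ?thesis using st homotopy_eqv_trans by blast
    qed
  qed
  have "C \<subseteq> C" by simp
  moreover have "\<forall>E\<in>C. \<forall>T. poly_face T E \<longrightarrow> T \<in> C" using pc unfolding polyhedral_complex_def by blast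
  ultimately have "Ylev C F a c C homotopy_eqv Ylev C F a c {}" by (rule gen)
  moreover have "Ylev C F a c C = {x \<in> \<Union>C. F x \<le> c}" unfolding Ylev_def using ac by auto
  moreover have "Ylev C F a c {} = {x \<in> \<Union>C. F x \<le> a}" unfolding Ylev_def by auto
  ultimately show ?thesis by simp
qed

theorem theorem1p4:
  fixes \<C> :: "'a::euclidean_space set set" and F :: "'a \<Rightarrow> real" and a b c :: real
  assumes "polyhedral_complex \<C>"
    and "cellwise_affine \<C> F"
    and "transversal_thresholds \<C> F a b"
    and "c \<in> {a..b}"
  shows "{x \<in> \<Union>\<C>. F x \<le> c} homotopy_eqv {x \<in> \<Union>\<C>. F x \<le> a}
       \<and> {x \<in> \<Union>\<C>. F x \<ge> c} homotopy_eqv {x \<in> \<Union>\<C>. F x \<ge> b}"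
proof
  have ab: "a \<le> c" "c \<le> b" using assms(4) by auto
  have tt1: "transversal_thresholds \<C> F a c"
  proof -
    have "{a..c} \<subseteq> {a..b}" using ab by auto
    then show ?thesis using assms(3) unfolding transversal_thresholds_def by (meson subset_trans)
  qed
  show "{x \<in> \<Union>\<C>. F x \<le> c} homotopy_eqv {x \<in> \<Union>\<C>. F x \<le> a}"
    by (rule main_le[OF assms(1) assms(2) tt1 ab(1)])
  define G where "G x = - F x" for x
  have caG: "cellwise_affine \<C> G"
    unfolding cellwise_affine_def
  proof
    fix E assume "E \<in> \<C>"
    then obtain u d where "\<forall>x\<in>E. F x = u \<bullet> x + d" using assms(2) unfolding cellwise_affine_def by blast
    then show "\<exists>u d. \<forall>x\<in>E. G x = u \<bullet> x + d" unfolding G_def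
      by (intro exI[of _ "-u"] exI[of _ "-d"]) simp
  qed
  have ttG: "transversal_thresholds \<C> G (-b) (-c)"
    unfolding transversal_thresholds_def
  proof (intro ballI impI)
    fix E assume E: "E \<in> \<C>" and fl: "flat_cell G E"
    have "flat_cell F E" using fl unfolding flat_cell_def G_def by (metis neg_equal_iff_equal)
    then have "\<not> F ` E \<subseteq> {a..b}" using assms(3) E unfolding transversal_thresholds_def by blast
    then obtain x where "x \<in> E" "F x \<notin> {a..b}" by blast
    moreover have "c \<le> b" "a \<le> c" using ab by auto
    ultimately show "\<not> G ` E \<subseteq> {-b..-c}" unfolding G_def by force
  qed
  have "{x \<in> \<Union>\<C>. G x \<le> -c} homotopy_eqv {x \<in> \<Union>\<C>. G x \<le> -b}"
    by (rule main_le[OF assms(1) caG ttG]) (use ab in simp)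
  moreover have "{x \<in> \<Union>\<C>. G x \<le> -c} = {x \<in> \<Union>\<C>. F x \<ge> c}" "{x \<in> \<Union>\<C>. G x \<le> -b} = {x \<in> \<Union>\<C>. F x \<ge> b}"
    unfolding G_def by auto
  ultimately show "{x \<in> \<Union>\<C>. F x \<ge> c} homotopy_eqv {x \<in> \<Union>\<C>. F x \<ge> b}" by simp
qed

end
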